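(* Let $q\ge 2$ be a prime power. For every $a\in\mathbb{F}_q\cup\{q\}$ and every $c\in\mathbb{F}_q$, any two distinct vertices of $\{(a,t,c)_1: t\in\mathbb{F}_q\}$ are at distance at least $6$ in $B'_q$.
   Context: $\mathbb{F}_q$ is the field with $q$ elements; $q$ is also used as a formal symbol not in $\mathbb{F}_q$. $B_q$ is the bipartite graph with parts $\{(x,y,z)_0: x,y,z\in\mathbb{F}_q\}$ and $\{(a,b,c)_1: a,b,c\in\mathbb{F}_q\}$, in which $(a,b,c)_1$ is adjacent exactly to $(j,\,aj+b,\,a^2j+2ab+c)_0$, $j\in\mathbb{F}_q$. $B'_q$ is obtained from $B_q$ by adding $q^2$ new vertices $(q,b,c)_1$, $b,c\in\mathbb{F}_q$, to the second part, where $(q,b,c)_1$ is adjacent exactly to $(c,b,j)_0$, $j\in\mathbb{F}_q$. *)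

theory Defs
  imports Main "HOL-Library.Extended_Nat"
begin

text \<open>The second part is V1 a b c, i.e. (a,b,c)_1, where a = Some a' stands for a' in F_q
  and a = None stands for the formal symbol q.\<close>
datatype 'a vertex = V0 'a 'a 'a | V1 "'a option" 'a 'a

fun adj1 :: "'a::field option \<Rightarrow> 'a \<Rightarrow> 'a \<Rightarrow> 'a \<Rightarrow> 'a \<Rightarrow> 'a \<Rightarrow> bool" where
  "adj1 (Some a) b c x y z =
     (\<exists>j. x = j \<and> y = a * j + b \<and> z = a^2 * j + 2 * a * b + c)"
| "adj1 None b c x y z = (\<exists>j. x = c \<and> y = b \<and> z = j)"

fun Bq'_adj :: "'a::field vertex \<Rightarrow> 'a vertex \<Rightarrow> bool" where
  "Bq'_adj (V1 a b c) (V0 x y z) = adj1 a b c x y z"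
| "Bq'_adj (V0 x y z) (V1 a b c) = adj1 a b c x y z"
| "Bq'_adj _ _ = False"

definition gdist :: "('v \<Rightarrow> 'v \<Rightarrow> bool) \<Rightarrow> 'v \<Rightarrow> 'v \<Rightarrow> enat" where
  "gdist E u v = (INF n \<in> {n. (E ^^ n) u v}. enat n)"

end

theory Submission
  imports Defs
begin

lemma key4:
  fixes al be :: "'a::field"
  assumes h1: "y1 = al*x1+t1" "y1 = be*x1+b" "z1 = al^2*x1+2*al*t1+c" "z1 = be^2*x1+2*be*b+c'"
      and h2: "y2 = al*x2+t2" "y2 = be*x2+b" "z2 = al^2*x2+2*al*t2+c" "z2 = be^2*x2+2*be*b+c'"
  shows "t1 = t2"
proof -
  have a1: "al*x1 - be*x1 = b - t1" using h1(1,2) by (simp add: algebra_simps)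
  have a2: "al*x2 - be*x2 = b - t2" using h2(1,2) by (simp add: algebra_simps)
  have "(al-be)*(x1-x2) = (al*x1 - be*x1) - (al*x2 - be*x2)" by (simp add: algebra_simps)
  also have "\<dots> = t2 - t1" using a1 a2 by simp
  finally have e1: "(al-be)*(x1-x2) = t2-t1" .
  have b1: "al^2*x1 + 2*al*t1 - be^2*x1 = 2*be*b + c' - c" using h1(3,4) by (simp add: algebra_simps)
  have b2: "al^2*x2 + 2*al*t2 - be^2*x2 = 2*be*b + c' - c" using h2(3,4) by (simp add: algebra_simps)
  have "(al^2-be^2)*(x1-x2) + 2*al*(t1-t2) = (al^2*x1 + 2*al*t1 - be^2*x1) - (al^2*x2 + 2*al*t2 - be^2*x2)"
    by (simp add: algebra_simps)
  also have "\<dots> = 0" using b1 b2 by simp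
  finally have e2: "(al^2-be^2)*(x1-x2) + 2*al*(t1-t2) = 0" .
  have "(al^2-be^2)*(x1-x2) = (al+be)*((al-be)*(x1-x2))" by (simp add: algebra_simps power2_eq_square)
  with e1 e2 have "(al+be)*(t2-t1) + 2*al*(t1-t2) = 0" by simp
  hence "(be-al)*(t2-t1) = 0" by (simp add: algebra_simps)
  hence "be = al \<or> t1 = t2" by auto
  thus ?thesis using h1(1,2) h2(1,2) by auto
qed

lemma path4:
  fixes a a' :: "'a::field option"
  assumes "adj1 a t1 c x1 y1 z1" "adj1 a' b c' x1 y1 z1" "adj1 a' b c' x2 y2 z2" "adj1 a t2 c x2 y2 z2"
  shows "t1 = t2"
  using assms
proof (cases a; cases a')
  fix al be assume "a = Some al" "a' = Some be"
  thus ?thesis using assms key4[of y1 al x1 t1 be b z1 c c' y2 x2 t2 z2] by auto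
qed auto

lemma parity:
  "(Bq'_adj ^^ n) u v \<Longrightarrow> ((\<exists>a b c. u = V1 a b c) = (\<exists>a b c. v = V1 a b c)) = even n"
proof (induction n arbitrary: v)
  case 0 then show ?case by simp
next
  case (Suc n)
  then obtain w where "(Bq'_adj ^^ n) u w" "Bq'_adj w v" by auto
  moreover have "Bq'_adj w v \<Longrightarrow> (\<exists>a b c. w = V1 a b c) = (\<not>(\<exists>a b c. v = V1 a b c))"
    by (cases w; cases v) auto
  ultimately show ?case using Suc.IH[of w] by (metis even_Suc)
qed

theorem claim4:
  fixes a :: "'a::{finite,field} option" and c t1 t2 :: "'a"
  assumes "t1 \<noteq> t2"
  shows "gdist Bq'_adj (V1 a t1 c) (V1 a t2 c) \<ge> 6"
proof -
  have no: "\<not> (Bq'_adj ^^ n) (V1 a t1 c) (V1 a t2 c)" if "n < 6" for n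
  proof
    assume p: "(Bq'_adj ^^ n) (V1 a t1 c) (V1 a t2 c)"
    hence ev: "even n" using parity by fastforce
    from that ev have "n = 0 \<or> n = 2 \<or> n = 4" by presburger
    moreover have "n \<noteq> 0" proof assume "n = 0" thus False using p assms by simp qed
    moreover have "n \<noteq> 2"
    proof
      assume "n = 2"
      with p obtain w where w: "Bq'_adj (V1 a t1 c) w" "Bq'_adj w (V1 a t2 c)"
        by (auto simp: numeral_eq_Suc)
      then show False using assms
        by (cases w; cases a) auto
    qed
    moreover have "n \<noteq> 4"
    proof
      assume "n = 4"
      with p obtain w1 w2 w3 where w: "Bq'_adj (V1 a t1 c) w1" "Bq'_adj w1 w2" "Bq'_adj w2 w3" "Bq'_adj w3 (V1 a t2 c)"
        by (auto simp: numeral_eq_Suc)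
      then obtain x1 y1 z1 x2 y2 z2 a' b c' where
        "adj1 a t1 c x1 y1 z1" "adj1 a' b c' x1 y1 z1" "adj1 a' b c' x2 y2 z2" "adj1 a t2 c x2 y2 z2"
        by (cases w1; cases w2; cases w3) auto
      then show False using path4 assms by blast
    qed
    ultimately show False by blast
  qed
  show ?thesis unfolding gdist_def
  proof (rule INF_greatest)
    fix n assume "n \<in> {n. (Bq'_adj ^^ n) (V1 a t1 c) (V1 a t2 c)}"
    hence "\<not> n < 6" using no by auto
    thus "6 \<le> enat n" by (simp add: numeral_eq_enat)
  qed
qed

end
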